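(* In the $\ell^2$ linear social choice setting, random dictatorship has worst-case distortion at most $O(d^{5/2})$.
   Context: Setting ($\ell^2$ linear social choice). Fix a dimension $d$. An instance consists of $n$ voters and $m$ candidates, each a vector in $\mathbb{R}^d_{\ge 0}$ with Euclidean norm $1$, with every voter vector in $\mathrm{Cone}(C)$ (nonnegative linear combinations of the candidate vectors $C$). Utility $u_v(c)=v^\top c$; each voter reports a ranking of $C$ consistent with its utilities (ties broken arbitrarily). $\mathrm{UW}(c)=\sum_v u_v(c)$. Distortion of a randomized rule on an instance: $\max_c\mathrm{UW}(c)/\mathbb{E}_{c\sim f}[\mathrm{UW}(c)]$; worst-case distortion is the supremum over instances, as a function of $d$. Random dictatorship: pick a voter uniformly at random and output its top-ranked candidate. *)

theory Defs
  imports Complex_Main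
begin

text \<open>Vectors in R^d are represented as functions nat => real; only coordinates i < d matter.\<close>

definition dotp :: "nat \<Rightarrow> (nat \<Rightarrow> real) \<Rightarrow> (nat \<Rightarrow> real) \<Rightarrow> real" where
  "dotp d x y = (\<Sum>i<d. x i * y i)"

definition unit_nonneg :: "nat \<Rightarrow> (nat \<Rightarrow> real) \<Rightarrow> bool" where
  "unit_nonneg d x \<longleftrightarrow> (\<forall>i<d. x i \<ge> 0) \<and> sqrt (\<Sum>i<d. (x i)^2) = 1"

definition in_cone :: "nat \<Rightarrow> (nat \<Rightarrow> real) set \<Rightarrow> (nat \<Rightarrow> real) \<Rightarrow> bool" where
  "in_cone d C v \<longleftrightarrow> (\<exists>lam. (\<forall>c\<in>C. lam c \<ge> 0) \<and> (\<forall>i<d. v i = (\<Sum>c\<in>C. lam c * c i)))"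

definition UW :: "nat \<Rightarrow> nat \<Rightarrow> (nat \<Rightarrow> nat \<Rightarrow> real) \<Rightarrow> (nat \<Rightarrow> real) \<Rightarrow> real" where
  "UW d n V c = (\<Sum>j<n. dotp d (V j) c)"

definition is_instance :: "nat \<Rightarrow> nat \<Rightarrow> (nat \<Rightarrow> nat \<Rightarrow> real) \<Rightarrow> (nat \<Rightarrow> real) set \<Rightarrow> bool" where
  "is_instance d n V C \<longleftrightarrow> n \<ge> 1 \<and> finite C \<and> C \<noteq> {} \<and> (\<forall>c\<in>C. unit_nonneg d c)
     \<and> (\<forall>j<n. unit_nonneg d (V j) \<and> in_cone d C (V j))"

definition valid_tops :: "nat \<Rightarrow> nat \<Rightarrow> (nat \<Rightarrow> nat \<Rightarrow> real) \<Rightarrow> (nat \<Rightarrow> real) set \<Rightarrow> (nat \<Rightarrow> nat \<Rightarrow> real) \<Rightarrow> bool" where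
  "valid_tops d n V C tp \<longleftrightarrow> (\<forall>j<n. tp j \<in> C \<and> (\<forall>c\<in>C. dotp d (V j) c \<le> dotp d (V j) (tp j)))"

text \<open>Expected welfare of random dictatorship (uniform voter, output its tp candidate).\<close>
definition RD_welfare :: "nat \<Rightarrow> nat \<Rightarrow> (nat \<Rightarrow> nat \<Rightarrow> real) \<Rightarrow> (nat \<Rightarrow> nat \<Rightarrow> real) \<Rightarrow> real" where
  "RD_welfare d n V tp = (\<Sum>j<n. UW d n V (tp j)) / real n"

definition RD_distortion :: "nat \<Rightarrow> nat \<Rightarrow> (nat \<Rightarrow> nat \<Rightarrow> real) \<Rightarrow> (nat \<Rightarrow> real) set \<Rightarrow> (nat \<Rightarrow> nat \<Rightarrow> real) \<Rightarrow> real" where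
  "RD_distortion d n V C tp = (MAX c\<in>C. UW d n V c) / RD_welfare d n V tp"

end

theory Submission
  imports Defs "HOL-Analysis.Convex"
begin

lemma un_sq: "unit_nonneg d x \<Longrightarrow> (\<Sum>i<d. (x i)^2) = 1"
  unfolding unit_nonneg_def by auto

lemma un_nn: "unit_nonneg d x \<Longrightarrow> i < d \<Longrightarrow> 0 \<le> x i"
  unfolding unit_nonneg_def by auto

lemma un_le1: assumes "unit_nonneg d x" "i < d" shows "x i \<le> 1"
proof -
  have "(x i)^2 \<le> (\<Sum>k<d. (x k)^2)"
    by (rule member_le_sum) (use assms in auto)
  then have "(x i)^2 \<le> 1" using un_sq[OF assms(1)] by simp
  then show ?thesis by (simp add: power_le_one_iff un_nn[OF assms]) 
qed

lemma dot_nn: "unit_nonneg d x \<Longrightarrow> unit_nonneg d y \<Longrightarrow> 0 \<le> dotp d x y"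
  unfolding dotp_def by (intro sum_nonneg) (simp add: un_nn)

lemma dot_le1: assumes "unit_nonneg d x" "unit_nonneg d y" shows "dotp d x y \<le> 1"
proof -
  have "dotp d x y \<le> (\<Sum>i<d. ((x i)^2 + (y i)^2)/2)"
    unfolding dotp_def
  proof (rule sum_mono)
    fix i show "x i * y i \<le> ((x i)^2 + (y i)^2)/2"
      using sum_squares_ge_zero[of "x i - y i" 0] by (simp add: power2_eq_square algebra_simps)
  qed
  also have "\<dots> = ((\<Sum>i<d. (x i)^2) + (\<Sum>i<d. (y i)^2))/2"
    by (simp add: sum.distrib sum_divide_distrib[symmetric])
  also have "\<dots> = 1" using un_sq[OF assms(1)] un_sq[OF assms(2)] by simp
  finally show ?thesis .
qed

lemma top_lb:
  assumes v: "unit_nonneg d v" and cone: "in_cone d C v" and fin: "finite C"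
    and cs: "\<forall>c\<in>C. unit_nonneg d c" and tC: "t \<in> C"
    and top: "\<forall>c\<in>C. dotp d v c \<le> dotp d v t"
  shows "1 \<le> sqrt (real d) * dotp d v t"
proof -
  obtain lam where lam: "\<forall>c\<in>C. lam c \<ge> 0" "\<forall>i<d. v i = (\<Sum>c\<in>C. lam c * c i)"
    using cone unfolding in_cone_def by blast
  define L where "L = (\<Sum>c\<in>C. lam c)"
  define p where "p = dotp d v t"
  have p0: "0 \<le> p" unfolding p_def using dot_nn v cs tC by blast
  have L0: "0 \<le> L" unfolding L_def using lam(1) by (simp add: sum_nonneg)
  have "1 = (\<Sum>i<d. v i * v i)" using un_sq[OF v] by (simp add: power2_eq_square)
  also have "\<dots> = (\<Sum>i<d. v i * (\<Sum>c\<in>C. lam c * c i))"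
    using lam(2) by (intro sum.cong) auto
  also have "\<dots> = (\<Sum>c\<in>C. lam c * dotp d v c)"
    unfolding dotp_def sum_distrib_left
    by (subst sum.swap) (simp add: mult_ac)
  also have "\<dots> \<le> (\<Sum>c\<in>C. lam c * p)"
    using lam(1) top unfolding p_def by (intro sum_mono mult_left_mono) auto
  also have "\<dots> = L * p" unfolding L_def by (simp add: sum_distrib_right)
  finally have h1: "1 \<le> L * p" .
  have "L \<le> (\<Sum>c\<in>C. lam c * (\<Sum>i<d. c i))"
    unfolding L_def
  proof (rule sum_mono)
    fix c assume c: "c \<in> C"
    have "1 = (\<Sum>i<d. (c i)^2)" using un_sq cs c by auto
    also have "\<dots> \<le> (\<Sum>i<d. c i)"
    proof (rule sum_mono)
      fix i assume "i \<in> {..<d}"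
      then have "0 \<le> c i" "c i \<le> 1" using un_nn un_le1 cs c by auto
      then show "(c i)^2 \<le> c i" by (simp add: power2_eq_square mult_left_le)
    qed
    moreover have "0 \<le> lam c" using lam(1) c by simp
    ultimately show "lam c \<le> lam c * (\<Sum>i<d. c i)"
      using mult_left_mono[of 1 "\<Sum>i<d. c i" "lam c"] by simp
  qed
  also have "\<dots> = (\<Sum>i<d. v i)"
    using lam(2) unfolding sum_distrib_left
    by (subst sum.swap) (simp add: mult_ac)
  finally have h2: "L \<le> (\<Sum>i<d. v i)" .
  have "(\<Sum>i<d. v i)^2 \<le> (\<Sum>i<d. (v i)^2) * card {..<d}"
    by (rule sum_squared_le_sum_of_squares)
  then have "(\<Sum>i<d. v i)^2 \<le> real d" using un_sq[OF v] by simp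
  then have "(\<Sum>i<d. v i) \<le> sqrt (real d)" using real_le_rsqrt by blast
  with h2 have "L \<le> sqrt (real d)" by simp
  then have "L * p \<le> sqrt (real d) * p" using p0 by (simp add: mult_right_mono)
  with h1 show ?thesis unfolding p_def by simp
qed

theorem theorem15:
  shows "\<exists>K::real. \<forall>d::nat. \<forall>n V C tp. d \<ge> 1 \<longrightarrow> is_instance d n V C \<longrightarrow> valid_tops d n V C tp
           \<longrightarrow> RD_distortion d n V C tp \<le> K * real d powr (5/2)"
proof (intro exI[of _ 1] allI impI)
  fix d :: nat and n V C tp
  assume d1: "d \<ge> 1" and inst: "is_instance d n V C" and vt: "valid_tops d n V C tp"
  have n1: "n \<ge> 1" and fin: "finite C" and Cne: "C \<noteq> {}" and cs: "\<forall>c\<in>C. unit_nonneg d c"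
    and vs: "\<And>j. j < n \<Longrightarrow> unit_nonneg d (V j)" and vc: "\<And>j. j < n \<Longrightarrow> in_cone d C (V j)"
    using inst unfolding is_instance_def by auto
  have tC: "\<And>j. j < n \<Longrightarrow> tp j \<in> C" and tt: "\<And>j. j < n \<Longrightarrow> \<forall>c\<in>C. dotp d (V j) c \<le> dotp d (V j) (tp j)"
    using vt unfolding valid_tops_def by auto
  have ts: "\<And>j. j < n \<Longrightarrow> unit_nonneg d (tp j)" using tC cs by auto
  define S where "S i = (\<Sum>k<n. V k i)" for i
  define T where "T i = (\<Sum>j<n. tp j i)" for i
  define w where "w j i = sqrt (V j i * tp j i)" for j i
  have E: "(\<Sum>j<n. UW d n V (tp j)) = (\<Sum>i<d. S i * T i)"
  proof -
    have "(\<Sum>j<n. UW d n V (tp j)) = (\<Sum>j<n. \<Sum>k<n. \<Sum>i<d. V k i * tp j i)"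
      unfolding UW_def dotp_def by simp
    also have "\<dots> = (\<Sum>j<n. \<Sum>i<d. \<Sum>k<n. V k i * tp j i)"
      by (rule sum.cong[OF refl], rule sum.swap)
    also have "\<dots> = (\<Sum>i<d. \<Sum>j<n. \<Sum>k<n. V k i * tp j i)"
      by (rule sum.swap)
    also have "\<dots> = (\<Sum>i<d. S i * T i)"
      unfolding S_def T_def sum_distrib_left sum_distrib_right by simp
    finally show ?thesis .
  qed
  have A: "(\<Sum>j<n. w j i)^2 \<le> S i * T i" if i: "i < d" for i
  proof -
    have "(\<Sum>j<n. w j i) = (\<Sum>j<n. sqrt (V j i) * sqrt (tp j i))"
      unfolding w_def by (simp add: real_sqrt_mult)
    then have "(\<Sum>j<n. w j i)^2 \<le> (\<Sum>j<n. (sqrt (V j i))^2) * (\<Sum>j<n. (sqrt (tp j i))^2)"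
      using Cauchy_Schwarz_ineq_sum by metis
    also have "\<dots> = S i * T i" unfolding S_def T_def
      using un_nn[OF vs i] un_nn[OF ts i] by simp
    finally show ?thesis .
  qed
  have B: "(\<Sum>i<d. \<Sum>j<n. w j i)^2 \<le> (\<Sum>i<d. (\<Sum>j<n. w j i)^2) * real d"
    using sum_squared_le_sum_of_squares[of "\<lambda>i. \<Sum>j<n. w j i" "{..<d}"] by simp
  have Cc: "dotp d (V j) (tp j) \<le> (\<Sum>i<d. w j i)" if j: "j < n" for j
    unfolding dotp_def
  proof (rule sum_mono)
    fix i assume "i \<in> {..<d}"
    then have i: "i < d" by simp
    have x0: "0 \<le> V j i * tp j i" using un_nn[OF vs[OF j] i] un_nn[OF ts[OF j] i] by simp
    have x1: "V j i * tp j i \<le> 1" using un_nn[OF vs[OF j] i] un_nn[OF ts[OF j] i]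
        un_le1[OF vs[OF j] i] un_le1[OF ts[OF j] i] by (simp add: mult_le_one)
    have "sqrt (V j i * tp j i) \<le> 1" using x1 by simp
    then have "sqrt (V j i * tp j i) * sqrt (V j i * tp j i) \<le> sqrt (V j i * tp j i)"
      using x0 mult_left_mono[of "sqrt (V j i * tp j i)" 1 "sqrt (V j i * tp j i)"] by simp
    then show "V j i * tp j i \<le> w j i" unfolding w_def using x0 by simp
  qed
  have sd: "sqrt (real d) > 0" using d1 by simp
  have D: "1 / sqrt (real d) \<le> (\<Sum>i<d. w j i)" if j: "j < n" for j
  proof -
    have "1 \<le> sqrt (real d) * dotp d (V j) (tp j)"
      using top_lb[OF vs[OF j] vc[OF j] fin cs tC[OF j] tt[OF j]] .
    then have "1 / sqrt (real d) \<le> dotp d (V j) (tp j)" using sd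
      by (simp add: divide_simps mult.commute)
    with Cc[OF j] show ?thesis by simp
  qed
  have "real n / sqrt (real d) \<le> (\<Sum>j<n. \<Sum>i<d. w j i)"
    using sum_mono[of "{..<n}" "\<lambda>j. 1 / sqrt (real d)" "\<lambda>j. \<Sum>i<d. w j i"] D by simp
  also have "\<dots> = (\<Sum>i<d. \<Sum>j<n. w j i)" by (rule sum.swap)
  finally have F: "real n / sqrt (real d) \<le> (\<Sum>i<d. \<Sum>j<n. w j i)" .
  have "(real n / sqrt (real d))^2 \<le> (\<Sum>i<d. \<Sum>j<n. w j i)^2"
    using F by (intro power_mono) auto
  then have "(real n)^2 / real d \<le> (\<Sum>i<d. \<Sum>j<n. w j i)^2"
    by (simp add: power_divide)
  also have "\<dots> \<le> (\<Sum>i<d. (\<Sum>j<n. w j i)^2) * real d" by (rule B)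
  also have "\<dots> \<le> (\<Sum>i<d. S i * T i) * real d"
    using A d1 by (intro mult_right_mono sum_mono) auto
  finally have G: "(real n)^2 / real d \<le> (\<Sum>i<d. S i * T i) * real d" .
  define W where "W = RD_welfare d n V tp"
  have "(real n)^2 / (real d)^2 \<le> (\<Sum>i<d. S i * T i)"
    using G d1 by (simp add: divide_simps power2_eq_square mult_ac)
  then have W: "real n / (real d)^2 \<le> W"
    unfolding W_def RD_welfare_def E[symmetric] using n1
    by (simp add: divide_simps power2_eq_square mult_ac)
  have Wpos: "0 < real n / (real d)^2" using n1 d1 by simp
  have M: "(MAX c\<in>C. UW d n V c) \<le> real n"
  proof -
    have "UW d n V c \<le> real n" if c: "c \<in> C" for c
    proof -
      have "UW d n V c \<le> (\<Sum>j<n. 1)" unfolding UW_def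
        using dot_le1 vs cs c by (intro sum_mono) auto
      then show ?thesis by simp
    qed
    then show ?thesis using fin Cne by (simp add: Max_le_iff)
  qed
  have "RD_distortion d n V C tp \<le> real n / W"
    unfolding RD_distortion_def W_def[symmetric] using M W Wpos
    by (intro divide_right_mono) auto
  also have "\<dots> \<le> real n / (real n / (real d)^2)"
  proof -
    have Wp: "0 < W" using W Wpos by linarith
    show ?thesis using W Wpos Wp n1 d1 by (intro divide_left_mono) (auto intro!: divide_pos_pos mult_pos_pos)
  qed
  also have "\<dots> = (real d)^2" using n1 by simp
  also have "\<dots> = real d powr 2" using d1 by (simp add: powr_realpow)
  also have "\<dots> \<le> real d powr (5/2)" using d1 by (intro powr_mono) auto
  finally show "RD_distortion d n V C tp \<le> 1 * real d powr (5/2)" by simp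
qed

end
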